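(* Let $d\geqslant2$ and let $\mathcal{D}\subseteq\mathbb{Z}^d$ be the set of all vectors $(\epsilon_1n,\dots,\epsilon_dn)$ with $n\in\mathbb{Z}$ and $\epsilon_1,\dots,\epsilon_d\in\{1,-1\}$. Then $\mathcal{D}$ is not eventually periodic (with respect to any choice of periods $u_1,\dots,u_d$). Moreover, for each $1\leqslant i\leqslant d$, the set $\mathcal{H}_i=\{(x_1,\dots,x_d)\in\mathbb{Z}^d:x_i=0\}$ is a minimal complement of $\mathcal{D}$ in $\mathbb{Z}^d$.
   Context: $\mathbb{N}=\{0,1,2,\dots\}$. Given $u_1,\dots,u_d\in\mathbb{Z}^d$ satisfying no nontrivial $\mathbb{Z}$-linear relation and $P=\mathbb{N}u_1+\dots+\mathbb{N}u_d$, a nonempty $X\subseteq\mathbb{Z}^d$ is eventually periodic with periods $u_1,\dots,u_d$ if $X\subseteq F+P$ for some nonempty finite $F\subseteq\mathbb{Z}^d$ and $x+P\subseteq X$ for all but finitely many $x\in X$. A nonempty $M\subseteq\mathbb{Z}^d$ is a complement of $W$ if $M+W=\mathbb{Z}^d$, and a minimal complement if no proper subset of $M$ is a complement of $W$. *)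

theory Defs
  imports "HOL-Analysis.Analysis"
begin

text \<open>Vectors of Z^d are modelled as int^'n, with d = CARD('n).
  A family of d periods is a map u :: 'n => int^'n.\<close>

definition Z_independent :: "('n::finite \<Rightarrow> int^'n) \<Rightarrow> bool" where
  "Z_independent u \<longleftrightarrow>
     (\<forall>c :: 'n \<Rightarrow> int. (\<Sum>i\<in>UNIV. c i *s u i) = 0 \<longrightarrow> (\<forall>i. c i = 0))"

definition period_cone :: "('n::finite \<Rightarrow> int^'n) \<Rightarrow> (int^'n) set" where
  "period_cone u = {\<Sum>i\<in>UNIV. int (k i) *s u i | k :: 'n \<Rightarrow> nat. True}"

definition setsum :: "('a::plus) set \<Rightarrow> 'a set \<Rightarrow> 'a set" where
  "setsum A B = {a + b | a b. a \<in> A \<and> b \<in> B}"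

definition eventually_periodic :: "(int^'n::finite) set \<Rightarrow> ('n \<Rightarrow> int^'n) \<Rightarrow> bool" where
  "eventually_periodic X u \<longleftrightarrow>
     Z_independent u \<and> X \<noteq> {} \<and>
     (\<exists>F. finite F \<and> F \<noteq> {} \<and> X \<subseteq> setsum F (period_cone u)) \<and>
     finite {x \<in> X. \<not> (setsum {x} (period_cone u) \<subseteq> X)}"

definition is_complement :: "(int^'n::finite) set \<Rightarrow> (int^'n) set \<Rightarrow> bool" where
  "is_complement M W \<longleftrightarrow> M \<noteq> {} \<and> setsum M W = UNIV"

definition minimal_complement :: "(int^'n::finite) set \<Rightarrow> (int^'n) set \<Rightarrow> bool" where
  "minimal_complement M W \<longleftrightarrow> is_complement M W \<and> (\<forall>M'. M' \<subset> M \<longrightarrow> \<not> is_complement M' W)"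

definition diagonals :: "(int^'n::finite) set" where
  "diagonals = {x. \<exists>(n::int) (e::'n \<Rightarrow> int). (\<forall>j. e j \<in> {1, -1}) \<and> x = (\<chi> j. e j * n)}"

definition coord_hyperplane :: "'n::finite \<Rightarrow> (int^'n) set" where
  "coord_hyperplane i = {x. x $ i = 0}"

end

theory Submission
  imports Defs
begin

lemma diag_abs:
  assumes "y \<in> (diagonals :: (int^'n::finite) set)"
  shows "\<bar>y $ j\<bar> = \<bar>y $ l\<bar>"
proof -
  from assms obtain n and e :: "'n \<Rightarrow> int" where e: "\<forall>j. e j \<in> {1, -1}" and y: "y = (\<chi> j. e j * n)"
    unfolding diagonals_def by blast
  have "\<bar>e j * n\<bar> = \<bar>n\<bar>" for j using e[rule_format, of j] by (auto simp: abs_mult)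
  then show ?thesis using y by simp
qed

lemma const_in_diag: "(\<chi> j. n) \<in> (diagonals :: (int^'n::finite) set)"
  unfolding diagonals_def
  by (rule CollectI, rule exI[of _ n], rule exI[of _ "\<lambda>_. 1"]) simp

lemma sum_single:
  fixes u :: "'n::finite \<Rightarrow> int^'n"
  shows "(\<Sum>i\<in>UNIV. (if i = m then a else 0) *s u i) = a *s u m"
proof -
  have "(\<Sum>i\<in>UNIV. (if i = m then a else 0) *s u i) = (\<Sum>i\<in>UNIV. if i = m then a *s u i else 0)"
    by (rule sum.cong) auto
  also have "\<dots> = a *s u m" by (simp add: sum.delta')
  finally show ?thesis .
qed

lemma in_cone: "int c *s u m \<in> period_cone u"
proof -
  have "(\<Sum>i\<in>UNIV. int ((\<lambda>i. if i = m then c else 0) i) *s u i) = int c *s u m"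
    using sum_single[of m "int c" u] by (smt (verit) of_nat_0 sum.cong)
  then show ?thesis unfolding period_cone_def mem_Collect_eq
    by (intro exI[of _ "\<lambda>i. if i = m then c else 0"]) simp
qed

lemma arith_key:
  fixes n a b :: int
  assumes "\<bar>n+a\<bar> = \<bar>n+b\<bar>" "\<bar>n+2*a\<bar> = \<bar>n+2*b\<bar>" "n \<noteq> 0"
  shows "a = b"
  using assms by (auto simp: abs_eq_iff)

lemma part1:
  assumes card: "CARD('n::finite) \<ge> 2" and ind: "Z_independent (u :: 'n \<Rightarrow> int^'n)"
  shows "\<not> eventually_periodic (diagonals :: (int^'n) set) u"
proof
  assume ep: "eventually_periodic (diagonals :: (int^'n) set) u"
  define B where "B = {x \<in> (diagonals :: (int^'n) set). \<not> (setsum {x} (period_cone u) \<subseteq> diagonals)}"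
  have fB: "finite B" using ep unfolding eventually_periodic_def B_def by blast
  have inj: "inj (\<lambda>n::int. (\<chi> j. n) :: int^'n)"
    by (rule injI) (metis vec_lambda_beta)
  have "finite (insert 0 ((\<lambda>n::int. (\<chi> j. n) :: int^'n) -` B))"
    using finite_vimageI[OF fB inj] by simp
  then obtain n :: int where "n \<notin> insert 0 ((\<lambda>n::int. (\<chi> j. n) :: int^'n) -` B)"
    using ex_new_if_finite[OF infinite_UNIV_int] by blast
  then have n0: "n \<noteq> 0" and nB: "(\<chi> j. n) \<notin> B" by auto
  have good: "setsum {(\<chi> j. n)::int^'n} (period_cone u) \<subseteq> diagonals"
    using nB const_in_diag unfolding B_def by blast
  have inD: "(\<chi> j. n) + int c *s u m \<in> (diagonals :: (int^'n) set)" for c m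
    using good in_cone[of c u m] unfolding setsum_def by blast
  have const: "u m $ j = u m $ l" for m j l
  proof -
    have "\<bar>((\<chi> j. n) + int 1 *s u m) $ j\<bar> = \<bar>((\<chi> j. n) + int 1 *s u m) $ l\<bar>"
      by (rule diag_abs[OF inD])
    moreover have "\<bar>((\<chi> j. n) + int 2 *s u m) $ j\<bar> = \<bar>((\<chi> j. n) + int 2 *s u m) $ l\<bar>"
      by (rule diag_abs[OF inD])
    ultimately have "\<bar>n + u m $ j\<bar> = \<bar>n + u m $ l\<bar>" "\<bar>n + 2 * u m $ j\<bar> = \<bar>n + 2 * u m $ l\<bar>"
      by simp_all
    then show ?thesis by (rule arith_key[OF _ _ n0])
  qed
  have nz: "u m \<noteq> 0" for m
  proof
    assume "u m = 0"
    then have "(\<Sum>i\<in>UNIV. (if i = m then 1 else 0) *s u i) = 0" by (simp add: sum_single)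
    then show False using ind[unfolded Z_independent_def, rule_format, of "\<lambda>i. if i = m then 1 else 0" m] by simp
  qed
  obtain m1 :: 'n where True by simp
  have "UNIV - {m1} \<noteq> {}"
  proof
    assume "UNIV - {m1} = {}"
    then have "(UNIV::'n set) = {m1}" by blast
    then have "CARD('n) = card {m1}" by (rule arg_cong)
    then show False using card by simp
  qed
  then obtain m2 where m12: "m2 \<noteq> m1" by blast
  obtain j0 :: 'n where True by simp
  define t1 where "t1 = u m1 $ j0"
  define t2 where "t2 = u m2 $ j0"
  have u1: "u m1 = (\<chi> j. t1)" unfolding t1_def vec_eq_iff
    by (metis const vec_lambda_beta)
  have u2: "u m2 = (\<chi> j. t2)" unfolding t2_def vec_eq_iff
    by (metis const vec_lambda_beta)
  have "(\<Sum>i\<in>UNIV. (if i = m1 then t2 else 0) *s u i) + (\<Sum>i\<in>UNIV. (if i = m2 then -t1 else 0) *s u i) = 0"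
    unfolding sum_single using u1 u2 by (simp add: vec_eq_iff algebra_simps)
  then have "(\<Sum>i\<in>UNIV. (\<lambda>i. (if i = m1 then t2 else 0) + (if i = m2 then -t1 else 0)) i *s u i) = 0"
    by (simp add: sum.distrib[symmetric] vector_sadd_rdistrib)
  then have "(if m2 = m1 then t2 else 0) + (if m2 = m2 then -t1 else 0) = 0"
    using ind[unfolded Z_independent_def, rule_format, of "\<lambda>i. (if i = m1 then t2 else 0) + (if i = m2 then -t1 else 0)" m2] by simp
  then have "t1 = 0" using m12 by simp
  then show False using u1 nz[of m1] by (simp add: vec_eq_iff)
qed

lemma part2: "minimal_complement (coord_hyperplane i) (diagonals :: (int^'n::finite) set)"
  unfolding minimal_complement_def
proof (intro conjI allI impI)
  show "is_complement (coord_hyperplane i) (diagonals :: (int^'n) set)"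
    unfolding is_complement_def
  proof (intro conjI)
    have "0 \<in> coord_hyperplane i" unfolding coord_hyperplane_def by simp
    then show "coord_hyperplane i \<noteq> {}" by blast
    show "setsum (coord_hyperplane i) diagonals = UNIV"
    proof (rule set_eqI, rule iffI)
      fix x :: "int^'n"
      have "x = (x - (\<chi> j. x $ i)) + (\<chi> j. x $ i)" by simp
      moreover have "x - (\<chi> j. x $ i) \<in> coord_hyperplane i" unfolding coord_hyperplane_def by simp
      ultimately show "x \<in> setsum (coord_hyperplane i) diagonals"
        unfolding setsum_def using const_in_diag by blast
    qed simp
  qed
next
  fix M' assume sub: "M' \<subset> coord_hyperplane i"
  then obtain h where hH: "h \<in> coord_hyperplane i" and hM: "h \<notin> M'" by blast
  have "h \<notin> setsum M' (diagonals :: (int^'n) set)"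
  proof
    assume "h \<in> setsum M' (diagonals :: (int^'n) set)"
    then obtain m y where m: "m \<in> M'" and y: "y \<in> diagonals" and hmy: "h = m + y"
      unfolding setsum_def by blast
    obtain n and e :: "'n \<Rightarrow> int" where e: "\<forall>j. e j \<in> {1, -1}" and yd: "y = (\<chi> j. e j * n)"
      using y unfolding diagonals_def by blast
    have "m $ i = 0" using m sub unfolding coord_hyperplane_def by blast
    moreover have "h $ i = 0" using hH unfolding coord_hyperplane_def by blast
    ultimately have "e i * n = 0" using hmy yd by simp
    then have "n = 0" using e[rule_format, of i] by auto
    then have "y = 0" using yd by (simp add: vec_eq_iff)
    then show False using hmy m hM by simp
  qed
  then show "\<not> is_complement M' diagonals" unfolding is_complement_def by blast
qed

theorem proposition6p1:
  assumes "CARD('n::finite) \<ge> 2"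
  shows "(\<forall>u :: 'n \<Rightarrow> int^'n. Z_independent u \<longrightarrow>
            \<not> eventually_periodic (diagonals :: (int^'n) set) u) \<and>
         (\<forall>i :: 'n. minimal_complement (coord_hyperplane i) (diagonals :: (int^'n) set))"
  using part1[OF assms] part2 by blast

end
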